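(* For $N\in\mathbb{N}$ and $m\in\mathbb{Z}_+$, $$\gamma_N^{2m,2m}=2^{2m}\,m!\,(2m)!\,\Bigl(\frac N2+m-1\Bigr)_m.$$
   Context: $|x|_N$ is the Euclidean norm on $\mathbb{R}^N$, $I_N=\{1,\ldots,N\}$, $D_i=\partial_{x_{i_1}}\cdots\partial_{x_{i_k}}$ for $i\in I_N^k$, $|\nabla_N^k u(x)|_{N^k}=\bigl(\sum_{i\in I_N^k}(D_iu(x))^2\bigr)^{1/2}$ (for $k=0$ this is $|u(x)|$). For $k\in\mathbb{Z}_+$, $s\in\mathbb{R}$, $\gamma_N^{s,k}$ denotes the constant value of $(|x|_N^{k-s}|\nabla_N^k[|x|_N^s]|_{N^k})^2$ on $\mathbb{R}^N\setminus\{0\}$ (it is known to be constant). $(\nu)_m=\prod_{j=0}^{m-1}(\nu-j)$, $(\nu)_0=1$. *)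

theory Defs
  imports "HOL-Analysis.Analysis"
begin

text \<open>Points of R^N are vectors of type real^'n with N = CARD('n).\<close>

definition partial_deriv :: "'n::finite \<Rightarrow> (real^'n \<Rightarrow> real) \<Rightarrow> real^'n \<Rightarrow> real" where
  "partial_deriv i f x = deriv (\<lambda>t. f (x + t *\<^sub>R axis i 1)) 0"

fun iter_partial :: "'n::finite list \<Rightarrow> (real^'n \<Rightarrow> real) \<Rightarrow> real^'n \<Rightarrow> real" where
  "iter_partial [] f = f"
| "iter_partial (i # is) f = partial_deriv i (iter_partial is f)"

definition norm_nabla :: "nat \<Rightarrow> (real^'n::finite \<Rightarrow> real) \<Rightarrow> real^'n \<Rightarrow> real" where
  "norm_nabla k u x = sqrt (\<Sum>is\<in>{is :: 'n list. length is = k}. (iter_partial is u x)^2)"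

text \<open>The quantity (|x|^{k-s} |nabla^k [|x|^s]|)^2 whose constant value is gamma_N^{s,k}.\<close>
definition gamma_expr :: "real \<Rightarrow> nat \<Rightarrow> real^'n::finite \<Rightarrow> real" where
  "gamma_expr s k x = (norm x powr (real k - s) * norm_nabla k (\<lambda>y. norm y powr s) x)^2"

definition falling :: "real \<Rightarrow> nat \<Rightarrow> real" where
  "falling \<nu> m = (\<Prod>j<m. \<nu> - real j)"

end

theory Submission imports Defs begin

inductive pf :: "nat \<Rightarrow> (real^'n::finite \<Rightarrow> real) \<Rightarrow> bool" where
  pconst: "pf 0 (\<lambda>x. c)"
| pcoord: "pf 1 (\<lambda>x. x$j)"
| padd: "pf d f \<Longrightarrow> pf d g \<Longrightarrow> pf d (\<lambda>x. f x + g x)"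
| pmult: "pf d f \<Longrightarrow> pf e g \<Longrightarrow> pf (d+e) (\<lambda>x. f x * g x)"
| pmono: "pf d f \<Longrightarrow> d \<le> e \<Longrightarrow> pf e f"

lemma pf_zero: "pf d (\<lambda>x. 0)"
  using pmono[OF pconst[of 0]] by simp

lemma pf_deriv:
  assumes "pf d f"
  shows "\<exists>D. pf (d-1) D \<and> (d = 0 \<longrightarrow> D = (\<lambda>x. 0)) \<and>
     (\<forall>x. ((\<lambda>t. f (x + t *\<^sub>R axis j 1)) has_real_derivative D x) (at 0))"
  using assms
proof induction
  case (pconst c)
  show ?case by (rule exI[of _ "\<lambda>x. 0"]) (auto intro: pf_zero)
next
  case (pcoord i)
  show ?case
    apply (rule exI[of _ "\<lambda>x. if i = j then 1 else 0"])
    apply (auto intro!: derivative_eq_intros pconst simp: axis_def)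
    done
next
  case (padd d f g)
  then obtain Df Dg where f: "pf (d-1) Df" "d = 0 \<longrightarrow> Df = (\<lambda>x. 0)"
      "\<forall>x. ((\<lambda>t. f (x + t *\<^sub>R axis j 1)) has_real_derivative Df x) (at 0)"
    and g: "pf (d-1) Dg" "d = 0 \<longrightarrow> Dg = (\<lambda>x. 0)"
      "\<forall>x. ((\<lambda>t. g (x + t *\<^sub>R axis j 1)) has_real_derivative Dg x) (at 0)" by blast
  show ?case
    apply (rule exI[of _ "\<lambda>x. Df x + Dg x"])
    using f g pf.padd[OF f(1) g(1)] by (auto intro!: derivative_eq_intros)
next
  case (pmult d f e g)
  then obtain Df Dg where f: "pf (d-1) Df" "d = 0 \<longrightarrow> Df = (\<lambda>x. 0)"
      "\<forall>x. ((\<lambda>t. f (x + t *\<^sub>R axis j 1)) has_real_derivative Df x) (at 0)"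
    and g: "pf (e-1) Dg" "e = 0 \<longrightarrow> Dg = (\<lambda>x. 0)"
      "\<forall>x. ((\<lambda>t. g (x + t *\<^sub>R axis j 1)) has_real_derivative Dg x) (at 0)" by blast
  have deg: "pf (d+e-1) (\<lambda>x. Df x * g x + f x * Dg x)"
  proof -
    have 1: "pf (d+e-1) (\<lambda>x. Df x * g x)"
    proof (cases "d = 0")
      case True then show ?thesis using f by (simp add: pf_zero)
    next
      case False then show ?thesis using pf.pmult[OF f(1) pmult.hyps(2)]
        by (metis Nat.add_diff_assoc2 One_nat_def Suc_leI neq0_conv)
    qed
    have 2: "pf (d+e-1) (\<lambda>x. f x * Dg x)"
    proof (cases "e = 0")
      case True then show ?thesis using g by (simp add: pf_zero)
    next
      case False then show ?thesis using pf.pmult[OF pmult.hyps(1) g(1)]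
        by (metis Nat.diff_add_assoc One_nat_def Suc_leI neq0_conv)
    qed
    show ?thesis by (rule padd[OF 1 2])
  qed
  show ?case
    apply (rule exI[of _ "\<lambda>x. Df x * g x + f x * Dg x"])
    using f g deg by (auto intro!: derivative_eq_intros)
next
  case (pmono d f e)
  then obtain D where "pf (d-1) D" "d = 0 \<longrightarrow> D = (\<lambda>x. 0)"
      "\<forall>x. ((\<lambda>t. f (x + t *\<^sub>R axis j 1)) has_real_derivative D x) (at 0)" by blast
  then show ?case using pmono.hyps(2)
    by (intro exI[of _ D]) (auto intro: pf.pmono)
qed

definition pfun where "pfun f \<longleftrightarrow> (\<exists>d. pf d f)"

lemma pd_eq: "(\<And>x. ((\<lambda>t. f (x + t *\<^sub>R axis j 1)) has_real_derivative D x) (at 0)) \<Longrightarrow> partial_deriv j f = D"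
  unfolding partial_deriv_def fun_eq_iff by (auto intro!: DERIV_imp_deriv)

lemma pf_has: "pf d f \<Longrightarrow> ((\<lambda>t. f (x + t *\<^sub>R axis j 1)) has_real_derivative partial_deriv j f x) (at 0)"
proof -
  assume "pf d f"
  from pf_deriv[OF this, of j] obtain D where
    D: "\<forall>x. ((\<lambda>t. f (x + t *\<^sub>R axis j 1)) has_real_derivative D x) (at 0)" by auto
  then have "partial_deriv j f = D" by (intro pd_eq) auto
  then show ?thesis using D by simp
qed

lemma pf_partial: "pf d f \<Longrightarrow> pf (d-1) (partial_deriv j f)"
proof -
  assume a: "pf d f"
  from pf_deriv[OF this, of j] obtain D where
    D: "pf (d-1) D" "\<forall>x. ((\<lambda>t. f (x + t *\<^sub>R axis j 1)) has_real_derivative D x) (at 0)" by blast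
  have "partial_deriv j f = D" using D(2) by (intro pd_eq) auto
  with D show ?thesis by simp
qed

lemma pf0_partial: "pf 0 f \<Longrightarrow> partial_deriv j f = (\<lambda>x. 0)"
proof -
  assume a: "pf 0 f"
  from pf_deriv[OF this, of j] obtain D where
    D: "D = (\<lambda>x. 0)" "\<forall>x. ((\<lambda>t. f (x + t *\<^sub>R axis j 1)) has_real_derivative D x) (at 0)" by auto
  have "partial_deriv j f = D" using D(2) by (intro pd_eq) auto
  with D show ?thesis by simp
qed

lemma pfun_has: "pfun f \<Longrightarrow> ((\<lambda>t. f (x + t *\<^sub>R axis j 1)) has_real_derivative partial_deriv j f x) (at 0)"
  unfolding pfun_def using pf_has by blast

lemma pfun_partial: "pfun f \<Longrightarrow> pfun (partial_deriv j f)"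
  unfolding pfun_def using pf_partial by blast

lemma pfun_add: "pfun f \<Longrightarrow> pfun g \<Longrightarrow> pfun (\<lambda>x. f x + g x)"
  unfolding pfun_def by (metis padd pmono max.cobounded1 max.cobounded2)

lemma pfun_mult: "pfun f \<Longrightarrow> pfun g \<Longrightarrow> pfun (\<lambda>x. f x * g x)"
  unfolding pfun_def by (metis pmult)

lemma pfun_const: "pfun (\<lambda>x. c)"
  unfolding pfun_def by (metis pconst)

lemma pfun_coord: "pfun (\<lambda>x. x$j)"
  unfolding pfun_def by (metis pcoord)

lemma pfun_cmult: "pfun f \<Longrightarrow> pfun (\<lambda>x. c * f x)"
  using pfun_mult[OF pfun_const] by blast

lemma pfun_sum: "finite S \<Longrightarrow> (\<And>i. i \<in> S \<Longrightarrow> pfun (f i)) \<Longrightarrow> pfun (\<lambda>x. \<Sum>i\<in>S. f i x)"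
  by (induction S rule: finite_induct) (auto intro: pfun_const pfun_add)

lemma pf_sum: "finite S \<Longrightarrow> (\<And>i. i \<in> S \<Longrightarrow> pf d (f i)) \<Longrightarrow> pf d (\<lambda>x. \<Sum>i\<in>S. f i x)"
  by (induction S rule: finite_induct) (auto intro: pf_zero padd)


lemma pd_const: "partial_deriv j (\<lambda>x. c) = (\<lambda>x. 0)"
  by (rule pd_eq) (auto intro!: derivative_eq_intros)

lemma pd_coord: "partial_deriv j (\<lambda>x. x$i) = (\<lambda>x. if i = j then 1 else 0)"
  by (rule pd_eq) (auto intro!: derivative_eq_intros simp: axis_def)

lemma pd_add: "pfun f \<Longrightarrow> pfun g \<Longrightarrow>
   partial_deriv j (\<lambda>x. f x + g x) = (\<lambda>x. partial_deriv j f x + partial_deriv j g x)"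
  by (rule pd_eq) (auto intro!: derivative_eq_intros pfun_has)

lemma pd_mult: "pfun f \<Longrightarrow> pfun g \<Longrightarrow>
   partial_deriv j (\<lambda>x. f x * g x) = (\<lambda>x. partial_deriv j f x * g x + f x * partial_deriv j g x)"
  by (rule pd_eq) (auto intro!: derivative_eq_intros pfun_has)

lemma pd_cmult: "pfun f \<Longrightarrow>
   partial_deriv j (\<lambda>x. c * f x) = (\<lambda>x. c * partial_deriv j f x)"
  by (rule pd_eq) (auto intro!: derivative_eq_intros pfun_has)

lemma pd_sum: "finite S \<Longrightarrow> (\<And>i. i \<in> S \<Longrightarrow> pfun (f i)) \<Longrightarrow>
   partial_deriv j (\<lambda>x. \<Sum>i\<in>S. f i x) = (\<lambda>x. \<Sum>i\<in>S. partial_deriv j (f i) x)"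
  by (rule pd_eq) (auto intro!: derivative_eq_intros pfun_has)

lemma pd_sym: "pf d f \<Longrightarrow> partial_deriv j (partial_deriv l f) = partial_deriv l (partial_deriv j f)"
proof (induction rule: pf.induct)
  case (pconst c) show ?case by (simp add: pd_const)
next
  case (pcoord i) show ?case by (simp add: pd_coord pd_const)
next
  case (padd d f g)
  then have "pfun f" "pfun g" unfolding pfun_def by auto
  then show ?case using padd.IH by (simp add: pd_add pfun_partial)
next
  case (pmult d f e g)
  then have f: "pfun f" and g: "pfun g" unfolding pfun_def by auto
  show ?case using pmult.IH f g
    by (simp add: pd_add pd_mult pfun_partial pfun_mult algebra_simps)
qed auto

lemma ip_pfun: "pfun f \<Longrightarrow> pfun (iter_partial is f)"
  by (induction "is") (auto intro: pfun_partial)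

lemma ip_pf: "pfun f \<Longrightarrow> \<exists>d. pf d (iter_partial is f)"
  using ip_pfun pfun_def by blast

lemma ip_zero: "iter_partial is (\<lambda>x. 0) = (\<lambda>x. 0)"
  by (induction "is") (auto simp: pd_const)

lemma ip_add: "pfun f \<Longrightarrow> pfun g \<Longrightarrow>
  iter_partial is (\<lambda>x. f x + g x) = (\<lambda>x. iter_partial is f x + iter_partial is g x)"
  by (induction "is") (auto simp: pd_add ip_pfun)

lemma ip_cmult: "pfun f \<Longrightarrow>
  iter_partial is (\<lambda>x. c * f x) = (\<lambda>x. c * iter_partial is f x)"
  by (induction "is") (auto simp: pd_cmult ip_pfun)

lemma ip_sum: "finite S \<Longrightarrow> (\<And>i. i \<in> S \<Longrightarrow> pfun (f i)) \<Longrightarrow>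
  iter_partial is (\<lambda>x. \<Sum>i\<in>S. f i x) = (\<lambda>x. \<Sum>i\<in>S. iter_partial is (f i) x)"
  by (induction "is") (auto simp: pd_sum ip_pfun)

lemma ip_comm: "pfun f \<Longrightarrow> iter_partial is (partial_deriv j f) = partial_deriv j (iter_partial is f)"
proof (induction "is")
  case Nil then show ?case by simp
next
  case (Cons i "is")
  obtain d where "pf d (iter_partial is f)" using ip_pf[OF Cons.prems] by blast
  then show ?case using Cons by (simp add: pd_sym)
qed

definition BB :: "nat \<Rightarrow> (real^'n::finite \<Rightarrow> real) \<Rightarrow> (real^'n \<Rightarrow> real) \<Rightarrow> real^'n \<Rightarrow> real" where
  "BB k u v x = (\<Sum>is\<in>{is. length is = k}. iter_partial is u x * iter_partial is v x)"

lemma finite_lists: "finite {is :: 'n::finite list. length is = k}"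
  using finite_lists_length_eq[of "UNIV :: 'n set" k] by simp

lemma lists_Suc: "{is :: 'n::finite list. length is = Suc k} =
   (\<lambda>(xs, n). n#xs) ` ({is. length is = k} \<times> UNIV)"
  using lists_length_Suc_eq[of "UNIV :: 'n set" k] by simp

lemma BB_Suc: "pfun u \<Longrightarrow> pfun v \<Longrightarrow>
  BB (Suc k) u v x = (\<Sum>j\<in>UNIV. BB k (partial_deriv j u) (partial_deriv j v) x)"
proof -
  assume u: "pfun u" and v: "pfun v"
  have "BB (Suc k) u v x = (\<Sum>p\<in>{is. length is = k} \<times> UNIV.
      iter_partial (snd p # fst p) u x * iter_partial (snd p # fst p) v x)"
    unfolding BB_def lists_Suc
    by (subst sum.reindex[OF inj_split_Cons]) (simp add: case_prod_beta)
  also have "\<dots> = (\<Sum>is\<in>{is. length is = k}. \<Sum>j\<in>UNIV.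
      iter_partial is (partial_deriv j u) x * iter_partial is (partial_deriv j v) x)"
    by (subst sum.cartesian_product) (simp add: case_prod_beta ip_comm u v)
  also have "\<dots> = (\<Sum>j\<in>UNIV. BB k (partial_deriv j u) (partial_deriv j v) x)"
    unfolding BB_def by (rule sum.swap)
  finally show ?thesis .
qed

lemma BB_lin1: "pfun f \<Longrightarrow> pfun g \<Longrightarrow>
  BB k (\<lambda>y. c * f y + g y) w x = c * BB k f w x + BB k g w x"
  unfolding BB_def
  by (simp add: ip_add ip_cmult pfun_cmult sum_distrib_left sum.distrib[symmetric] algebra_simps)

lemma BB_zero: "BB k (\<lambda>y. 0) w x = 0"
  unfolding BB_def by (simp add: ip_zero)

lemma BB_sum2: "finite S \<Longrightarrow> (\<And>i. i \<in> S \<Longrightarrow> pfun (w i)) \<Longrightarrow>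
  BB k u (\<lambda>y. \<Sum>i\<in>S. w i y) x = (\<Sum>i\<in>S. BB k u (w i) x)"
  unfolding BB_def by (simp add: ip_sum sum_distrib_left sum.swap[of _ S])

lemma BB_cmult1: "pfun f \<Longrightarrow> BB k (\<lambda>y. c * f y) w x = c * BB k f w x"
  using BB_lin1[of f "\<lambda>y. 0" k c w x] by (simp add: pfun_const BB_zero)

lemma L1: "pf d G \<Longrightarrow> d < k \<Longrightarrow> pfun w \<Longrightarrow>
  BB k (\<lambda>y. y$j * G y) w x = real k * BB (k-1) G (partial_deriv j w) x"
proof (induction k arbitrary: d G w)
  case 0 then show ?case by simp
next
  case (Suc k)
  have G: "pfun G" using Suc.prems pfun_def by blast
  have yG: "pfun (\<lambda>y. y$j * G y)" by (rule pfun_mult[OF pfun_coord G])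
  have dG: "\<And>l. pfun (partial_deriv l G)" using G pfun_partial by blast
  have dw: "\<And>l. pfun (partial_deriv l w)" using Suc.prems pfun_partial by blast
  have pdyG: "\<And>l. partial_deriv l (\<lambda>y. y$j * G y) =
      (\<lambda>y. (if j = l then 1 else 0) * G y + y$j * partial_deriv l G y)"
    by (simp add: pd_mult pfun_coord G pd_coord)
  have "BB (Suc k) (\<lambda>y. y$j * G y) w x =
     (\<Sum>l\<in>UNIV. BB k (partial_deriv l (\<lambda>y. y$j * G y)) (partial_deriv l w) x)"
    by (rule BB_Suc[OF yG Suc.prems(3)])
  also have "\<dots> = (\<Sum>l\<in>UNIV. (if j = l then 1 else 0) * BB k G (partial_deriv l w) x
       + BB k (\<lambda>y. y$j * partial_deriv l G y) (partial_deriv l w) x)"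
    by (simp only: pdyG BB_lin1[OF G pfun_mult[OF pfun_coord dG]])
  also have "\<dots> = BB k G (partial_deriv j w) x +
      (\<Sum>l\<in>UNIV. BB k (\<lambda>y. y$j * partial_deriv l G y) (partial_deriv l w) x)"
  proof -
    have e: "\<And>a l. (if j = l then 1 else 0) * a = (if j = l then a else (0::real))" by simp
    show ?thesis by (simp only: e sum.distrib) simp
  qed
  also have "(\<Sum>l\<in>UNIV. BB k (\<lambda>y. y$j * partial_deriv l G y) (partial_deriv l w) x)
      = real k * BB k G (partial_deriv j w) x"
  proof (cases k)
    case 0
    then have "d = 0" using Suc.prems by simp
    then have "\<And>l. partial_deriv l G = (\<lambda>x. 0)" using Suc.prems pf0_partial by blast
    then show ?thesis using 0 by (simp add: BB_zero)
  next
    case (Suc k')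
    have "\<And>l. BB k (\<lambda>y. y$j * partial_deriv l G y) (partial_deriv l w) x
        = real k * BB k' (partial_deriv l G) (partial_deriv l (partial_deriv j w)) x"
    proof -
      fix l
      have "pf (d-1) (partial_deriv l G)" using Suc.prems pf_partial by blast
      moreover have "d - 1 < k" using Suc.prems Suc by simp
      ultimately have "BB k (\<lambda>y. y$j * partial_deriv l G y) (partial_deriv l w) x
          = real k * BB (k-1) (partial_deriv l G) (partial_deriv j (partial_deriv l w)) x"
        using Suc.IH dw by blast
      moreover obtain e where "pf e w" using Suc.prems pfun_def by blast
      ultimately show "BB k (\<lambda>y. y$j * partial_deriv l G y) (partial_deriv l w) x
        = real k * BB k' (partial_deriv l G) (partial_deriv l (partial_deriv j w)) x"
        using Suc by (simp add: pd_sym)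
    qed
    then show ?thesis
      using Suc BB_Suc[OF G pfun_partial[OF Suc.prems(3)], of k' j x]
      by (simp add: sum_distrib_left)
  qed
  finally show ?case by (simp add: algebra_simps)
qed

definition Q :: "real^'n::finite \<Rightarrow> real" where "Q y = (\<Sum>l\<in>UNIV. (y$l)^2)"
definition F :: "nat \<Rightarrow> real^'n::finite \<Rightarrow> real" where "F m y = Q y ^ m"
definition lap :: "(real^'n::finite \<Rightarrow> real) \<Rightarrow> real^'n \<Rightarrow> real" where
  "lap v = (\<lambda>x. \<Sum>l\<in>UNIV. partial_deriv l (partial_deriv l v) x)"

lemma pf_Q: "pf 2 (Q :: real^'n::finite \<Rightarrow> real)"
proof -
  have "pf 2 (\<lambda>y::real^'n. \<Sum>l\<in>UNIV. y$l * y$l)"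
    by (rule pf_sum) (use pmult[OF pcoord pcoord] in \<open>unfold one_add_one[symmetric], auto\<close>)
  then show ?thesis unfolding Q_def[abs_def] by (simp add: power2_eq_square)
qed

lemma pf_F: "pf (2*m) (F m :: real^'n::finite \<Rightarrow> real)"
proof (induction m)
  case 0 then show ?case unfolding F_def[abs_def] using pconst[of 1] by simp
next
  case (Suc m)
  have "pf (2 + 2*m) (\<lambda>y::real^'n. Q y * F m y)" by (rule pmult[OF pf_Q Suc])
  moreover have "(\<lambda>y::real^'n. Q y * F m y) = F (Suc m)" by (simp add: F_def fun_eq_iff)
  ultimately show ?case by simp
qed

lemma pfun_F: "pfun (F m)" using pf_F pfun_def by blast

lemma pd_F: "partial_deriv j (F (Suc m) :: real^'n::finite \<Rightarrow> real) =
   (\<lambda>y. 2 * real (Suc m) * (y$j * F m y))"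
proof (rule pd_eq)
  fix x :: "real^'n"
  have h: "((\<lambda>t. \<Sum>l\<in>UNIV. ((x + t *\<^sub>R axis j 1)$l)^2) has_real_derivative 2 * x$j) (at 0)"
  proof -
    have c: "\<And>l t. ((x + t *\<^sub>R axis j 1)$l)^2 = (x$l)^2 + (if l = j then 2*t*x$j + t^2 else 0)"
      by (auto simp: axis_def power2_eq_square algebra_simps)
    have eq: "(\<lambda>t. \<Sum>l\<in>UNIV. ((x + t *\<^sub>R axis j 1)$l)^2) = (\<lambda>t. (\<Sum>l\<in>UNIV. (x$l)^2) + (2*t*x$j + t^2))"
      unfolding c sum.distrib by simp
    show ?thesis by (subst eq) (auto intro!: derivative_eq_intros)
  qed
  from DERIV_power[OF h, of "Suc m"]
  show "((\<lambda>t. F (Suc m) (x + t *\<^sub>R axis j 1)) has_real_derivative 2 * real (Suc m) * (x$j * F m x)) (at 0)"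
    unfolding F_def Q_def by (simp add: algebra_simps)
qed

lemma pd_F0: "partial_deriv j (F 0 :: real^'n::finite \<Rightarrow> real) = (\<lambda>y. 0)"
  by (rule pf0_partial) (use pf_F[of 0] in simp)

lemma pfun_lap: "pfun v \<Longrightarrow> pfun (lap v)"
  unfolding lap_def by (intro pfun_sum) (auto intro: pfun_partial)

lemma lap_cmult: "pfun g \<Longrightarrow> lap (\<lambda>y. c * g y) = (\<lambda>y. c * lap g y)"
  unfolding lap_def by (simp add: pd_cmult pfun_partial sum_distrib_left)

lemma lap_F: "lap (F (Suc k) :: real^'n::finite \<Rightarrow> real) =
   (\<lambda>y. 2 * real (Suc k) * (real CARD('n) + 2 * real k) * F k y)"
proof -
  have d2: "\<And>l. partial_deriv l (partial_deriv l (F (Suc k) :: real^'n \<Rightarrow> real)) =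
     (\<lambda>y. 2 * real (Suc k) * (F k y + y$l * partial_deriv l (F k) y))"
    by (simp add: pd_F pd_cmult pd_mult pfun_mult pfun_coord pfun_F pd_coord)
  show ?thesis
  proof (cases k)
    case 0
    then show ?thesis unfolding lap_def d2 by (simp add: pd_F0 fun_eq_iff)
  next
    case (Suc k')
    have "\<And>y::real^'n. (\<Sum>l\<in>UNIV. 2 * real (Suc k) * (F k y + y$l * (2 * real k * (y$l * F k' y))))
      = 2 * real (Suc k) * (real CARD('n) * F k y + 2 * real k * (Q y * F k' y))"
      by (simp add: sum.distrib sum_distrib_left sum_distrib_right Q_def algebra_simps power2_eq_square)
    moreover have "\<And>y::real^'n. Q y * F k' y = F k y" using Suc by (simp add: F_def)
    ultimately show ?thesis unfolding lap_def d2 using Suc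
      by (simp add: pd_F fun_eq_iff algebra_simps)
  qed
qed

lemma lapN: "(lap ^^ i) (\<lambda>y. c * F i y) =
  (\<lambda>y::real^'n::finite. c * (\<Prod>k<i. 2 * real (Suc k) * (real CARD('n) + 2 * real k)))"
proof (induction i arbitrary: c)
  case 0 then show ?case by (simp add: F_def)
next
  case (Suc i)
  have "lap (\<lambda>y::real^'n. c * F (Suc i) y) =
     (\<lambda>y. (c * (2 * real (Suc i) * (real CARD('n) + 2 * real i))) * F i y)"
    by (simp add: lap_cmult pfun_F lap_F algebra_simps)
  note eq = this
  have "(lap ^^ Suc i) (\<lambda>y::real^'n. c * F (Suc i) y) = (lap ^^ i) (lap (\<lambda>y::real^'n. c * F (Suc i) y))"
    by (simp only: funpow_Suc_right comp_apply)
  also have "\<dots> = (lap ^^ i) (\<lambda>y. (c * (2 * real (Suc i) * (real CARD('n) + 2 * real i))) * F i y)"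
    by (simp only: eq)
  also have "\<dots> = (\<lambda>y. (c * (2 * real (Suc i) * (real CARD('n) + 2 * real i))) *
     (\<Prod>k<i. 2 * real (Suc k) * (real CARD('n) + 2 * real k)))"
    by (rule Suc.IH)
  finally show ?case by (simp only: prod.lessThan_Suc mult_ac)
qed

lemma L2: "pfun v \<Longrightarrow> BB (2*m) (F m) v x = fact (2*m) * (lap ^^ m) v x"
proof (induction m arbitrary: v)
  case 0
  have "{is :: 'a list. length is = 0} = {[]}" by auto
  then show ?case by (simp add: BB_def F_def)
next
  case (Suc m)
  have dv: "\<And>j. pfun (partial_deriv j v)" using Suc.prems pfun_partial by blast
  have "BB (2 * Suc m) (F (Suc m)) v x = BB (Suc (Suc (2*m))) (F (Suc m)) v x" by simp
  also have "\<dots> = (\<Sum>j\<in>UNIV. BB (Suc (2*m)) (\<lambda>y. 2 * real (Suc m) * (y$j * F m y)) (partial_deriv j v) x)"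
    by (simp only: BB_Suc[OF pfun_F Suc.prems] pd_F)
  also have "\<dots> = (\<Sum>j\<in>UNIV. 2 * real (Suc m) * (real (Suc (2*m)) * BB (2*m) (F m) (partial_deriv j (partial_deriv j v)) x))"
    by (simp only: BB_cmult1[OF pfun_mult[OF pfun_coord pfun_F]] L1[OF pf_F _ dv]) simp
  also have "\<dots> = 2 * real (Suc m) * real (Suc (2*m)) * BB (2*m) (F m) (lap v) x"
  proof -
    have "BB (2*m) (F m) (lap v) x = (\<Sum>j\<in>UNIV. BB (2*m) (F m) (partial_deriv j (partial_deriv j v)) x)"
      unfolding lap_def by (rule BB_sum2) (auto intro: pfun_partial dv)
    then show ?thesis by (simp add: sum_distrib_left mult.assoc)
  qed
  also have "\<dots> = fact (2 * Suc m) * (lap ^^ Suc m) v x"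
    using Suc.IH[OF pfun_lap[OF Suc.prems]]
    by (simp add: funpow_swap1 algebra_simps)
  finally show ?case .
qed

lemma prod_coef: "(\<Prod>k<m. 2 * real (Suc k) * (N + 2 * real k)) = 2^(2*m) * fact m * (\<Prod>k<m. N/2 + real k)"
  by (induction m) (simp_all add: algebra_simps power_add)

lemma falling_rev: "falling (c + real m - 1) m = (\<Prod>k<m. c + real k)"
proof (induction m arbitrary: c)
  case 0 then show ?case by (simp add: falling_def)
next
  case (Suc m)
  have "falling (c + real (Suc m) - 1) (Suc m) = (c + real m) * (\<Prod>j<m. c + real m - 1 - real j)"
    unfolding falling_def by (subst prod.lessThan_Suc_shift) (simp add: algebra_simps)
  also have "(\<Prod>j<m. c + real m - 1 - real j) = falling (c + real m - 1) m"
    by (simp add: falling_def)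
  finally show ?case using Suc.IH by (simp add: mult.commute)
qed

theorem lemma3p3:
  fixes m :: nat and x :: "real^'n::finite"
  assumes "x \<noteq> 0"
  shows "gamma_expr (real (2*m)) (2*m) x =
    2^(2*m) * fact m * fact (2*m) * falling (real CARD('n) / 2 + real m - 1) m"
proof (cases "m = 0")
  case True
  have "{is :: 'n list. length is = 0} = {[]}" by auto
  then show ?thesis using True assms
    by (simp add: gamma_expr_def norm_nabla_def falling_def)
next
  case False
  have fe: "(\<lambda>y::real^'n. norm y powr real (2*m)) = F m"
  proof
    fix y :: "real^'n"
    show "norm y powr real (2*m) = F m y"
    proof (cases "y = 0")
      case True then show ?thesis using False by (simp add: F_def Q_def)
    next
      case yn: False
      have "norm y powr real (2*m) = norm y ^ (2*m)"
        using yn powr_realpow[of "norm y" "2*m"] by simp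
      also have "\<dots> = (norm y ^ 2) ^ m" by (simp add: power_mult)
      also have "norm y ^ 2 = Q y"
        unfolding power2_norm_eq_inner Q_def inner_vec_def by (simp add: power2_eq_square)
      finally show ?thesis by (simp add: F_def)
    qed
  qed
  have S: "(\<Sum>is\<in>{is. length is = 2*m}. (iter_partial is (F m) x)^2) = BB (2*m) (F m) (F m) x"
    unfolding BB_def by (simp add: power2_eq_square)
  have "BB (2*m) (F m) (F m) x = fact (2*m) * (lap ^^ m) (F m) x"
    by (rule L2[OF pfun_F])
  also have "(lap ^^ m) (F m) = (lap ^^ m) (\<lambda>y. 1 * F m y)" by simp
  also have "\<dots> = (\<lambda>y::real^'n. 1 * (\<Prod>k<m. 2 * real (Suc k) * (real CARD('n) + 2 * real k)))"
    by (rule lapN)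
  finally have B: "BB (2*m) (F m) (F m) x =
     fact (2*m) * (2^(2*m) * fact m * (\<Prod>k<m. real CARD('n)/2 + real k))"
    using prod_coef[where m=m and N="real CARD('n)"] by simp
  have nn: "0 \<le> BB (2*m) (F m) (F m) x"
    unfolding S[symmetric] by (intro sum_nonneg) simp
  have "gamma_expr (real (2*m)) (2*m) x = BB (2*m) (F m) (F m) x"
    unfolding gamma_expr_def norm_nabla_def fe S using assms nn by simp
  also have "\<dots> = 2^(2*m) * fact m * fact (2*m) * falling (real CARD('n) / 2 + real m - 1) m"
    unfolding B falling_rev by simp
  finally show ?thesis .
qed

end
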